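(* Let $H$ be a multigraph with even order $p \geq 4$. Suppose $d \geq 2$, and that except for one vertex $s$ for which $\deg(s) \leq d$, each vertex of $H$ has degree $d$ or $d+1$, with at most $d$ vertices having degree $d+1$, and at least one vertex other than $s$ having degree $d$. Suppose that $\mathrm{ex}(H-s, d) < p/4$, and that $H - s$ is $d$-slack-dominant. Then: if $\deg(s) > 0$, then $H$ has a perfect matching; and if $\deg(s) = 0$, then there is a vertex $v$ of $H$ with degree $d$ such that $H - s - v$ has a perfect matching.
   Context: Multigraphs may have parallel edges; $n(K)$ and $e(K)$ denote the order and size of a multigraph $K$, and subgraphs on a vertex set are taken to be induced subgraphs. For an integer $k$ and a nontrivial (more than one vertex) odd-order multigraph $K$, the $k$-excess of $K$ is $\mathrm{ex}(K,k) = e(K) - \lfloor k(n(K)-1)/2 \rfloor$ and the $k$-slack of $K$ is $\mathrm{sl}(K,k) = (k+1)\lfloor (n(K)-1)/2 \rfloor - e(K)$. In the setting where all vertices of $H$ have degree $d$ or $d+1$ except possibly one vertex $s$ with $\deg(s) \le d$, $H - s$ is called $d$-slack dominant if $\mathrm{sl}(H-s, d) < \mathrm{sl}(R, d)$ for every odd-order, nontrivial proper induced subgraph $R$ of $H - s$ whose coboundary (the set of edges of $H$ with exactly one end in $R$) has cardinality at most $d$. *)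

theory Defs
  imports Main
begin

text \<open>A finite loopless multigraph on vertex set V, given by an edge-multiplicity
function m: m u v is the number of parallel edges between u and v.\<close>
definition multigraph :: "'a set \<Rightarrow> ('a \<Rightarrow> 'a \<Rightarrow> nat) \<Rightarrow> bool" where
  "multigraph V m \<longleftrightarrow> finite V \<and> (\<forall>u v. m u v = m v u) \<and> (\<forall>u. m u u = 0)
     \<and> (\<forall>u v. m u v \<noteq> 0 \<longrightarrow> u \<in> V \<and> v \<in> V)"

definition deg :: "'a set \<Rightarrow> ('a \<Rightarrow> 'a \<Rightarrow> nat) \<Rightarrow> 'a \<Rightarrow> nat" where
  "deg V m v = (\<Sum>u\<in>V. m v u)"

definition esize :: "('a \<Rightarrow> 'a \<Rightarrow> nat) \<Rightarrow> 'a set \<Rightarrow> nat" where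
  "esize m S = (\<Sum>u\<in>S. \<Sum>v\<in>S. m u v) div 2"

definition cobound :: "'a set \<Rightarrow> ('a \<Rightarrow> 'a \<Rightarrow> nat) \<Rightarrow> 'a set \<Rightarrow> nat" where
  "cobound V m S = (\<Sum>u\<in>S. \<Sum>v\<in>V - S. m u v)"

definition excess :: "('a \<Rightarrow> 'a \<Rightarrow> nat) \<Rightarrow> 'a set \<Rightarrow> int \<Rightarrow> int" where
  "excess m S k = int (esize m S) - (k * (int (card S) - 1)) div 2"

definition slack :: "('a \<Rightarrow> 'a \<Rightarrow> nat) \<Rightarrow> 'a set \<Rightarrow> int \<Rightarrow> int" where
  "slack m S k = (k + 1) * ((int (card S) - 1) div 2) - int (esize m S)"

definition slack_dominant :: "'a set \<Rightarrow> ('a \<Rightarrow> 'a \<Rightarrow> nat) \<Rightarrow> 'a \<Rightarrow> nat \<Rightarrow> bool" where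
  "slack_dominant V m s d \<longleftrightarrow>
     (\<forall>R. R \<subset> V - {s} \<and> odd (card R) \<and> card R > 1 \<and> cobound V m R \<le> d
        \<longrightarrow> slack m (V - {s}) (int d) < slack m R (int d))"

definition has_perfect_matching :: "('a \<Rightarrow> 'a \<Rightarrow> nat) \<Rightarrow> 'a set \<Rightarrow> bool" where
  "has_perfect_matching m W \<longleftrightarrow>
     (\<exists>M. (\<forall>e\<in>M. \<exists>u v. e = {u, v} \<and> u \<noteq> v \<and> u \<in> W \<and> v \<in> W \<and> m u v > 0)
        \<and> (\<forall>e\<in>M. \<forall>e'\<in>M. e \<noteq> e' \<longrightarrow> e \<inter> e' = {})
        \<and> \<Union>M = W)"

end

theory Submission
  imports Defs
begin


lemma hall:
  assumes "finite I" "\<forall>i\<in>I. finite (A i)" "\<forall>K\<subseteq>I. card K \<le> card (\<Union>(A ` K))"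
  shows "\<exists>f. inj_on f I \<and> (\<forall>i\<in>I. f i \<in> A i)"
  using assms
proof (induction "card I" arbitrary: I A rule: less_induct)
  case less
  show ?case
  proof (cases "I = {}")
    case True then show ?thesis by auto
  next
    case False
    show ?thesis
    proof (cases "\<forall>K. K \<subseteq> I \<and> K \<noteq> {} \<and> K \<noteq> I \<longrightarrow> card K < card (\<Union>(A ` K))")
      case True
      obtain i where i: "i \<in> I" using False by auto
      have "card {i} \<le> card (\<Union>(A ` {i}))" using less.prems(3) i by blast
      then have "A i \<noteq> {}" by auto
      then obtain x where x: "x \<in> A i" by auto
      define A' where "A' = (\<lambda>j. A j - {x})"
      have "\<exists>f. inj_on f (I - {i}) \<and> (\<forall>j\<in>I - {i}. f j \<in> A' j)"
      proof (rule less.hyps)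
        show "card (I - {i}) < card I" using i less.prems(1) by (metis card_Diff1_less)
        show "finite (I - {i})" using less.prems(1) by simp
        show "\<forall>j\<in>I - {i}. finite (A' j)" using less.prems(2) by (simp add: A'_def)
        show "\<forall>K\<subseteq>I - {i}. card K \<le> card (\<Union>(A' ` K))"
        proof (intro allI impI)
          fix K assume K: "K \<subseteq> I - {i}"
          show "card K \<le> card (\<Union>(A' ` K))"
          proof (cases "K = {}")
            case True then show ?thesis by simp
          next
            case False
            have fK: "finite (\<Union>(A ` K))" using K less.prems(1,2)
              by (meson Diff_subset finite_UN_I finite_subset subsetD)
            have "card K < card (\<Union>(A ` K))" using True K False i by blast
            moreover have eq: "\<Union>(A' ` K) = \<Union>(A ` K) - {x}" by (auto simp: A'_def)
            moreover have "card (\<Union>(A ` K) - {x}) \<ge> card (\<Union>(A ` K)) - 1"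
              using diff_card_le_card_Diff[of "{x}" "\<Union>(A ` K)"] by simp
            ultimately show ?thesis by (simp only: eq)
          qed
        qed
      qed
      then obtain f where f: "inj_on f (I - {i})" "\<forall>j\<in>I - {i}. f j \<in> A' j" by auto
      define g where "g = f(i := x)"
      have "inj_on g I"
      proof -
        have "inj_on g (I - {i})" using f(1) by (simp add: g_def inj_on_def)
        moreover have "g i \<notin> g ` (I - {i})" using f(2) by (auto simp: g_def A'_def)
        ultimately have "inj_on g (insert i (I - {i}))" by (simp only: inj_on_insert) simp
        moreover have "insert i (I - {i}) = I" using i by auto
        ultimately show ?thesis by simp
      qed
      moreover have "\<forall>j\<in>I. g j \<in> A j" using f(2) x by (auto simp: g_def A'_def)
      ultimately show ?thesis by blast
    next
      case False
      then obtain K where K: "K \<subseteq> I" "K \<noteq> {}" "K \<noteq> I" "card (\<Union>(A ` K)) \<le> card K"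
        by (auto simp: not_less)
      have fK: "finite K" using K(1) less.prems(1) finite_subset by blast
      have fUK: "finite (\<Union>(A ` K))" using K(1) less.prems(2) fK by auto
      have cK: "card (\<Union>(A ` K)) = card K" using K(4) less.prems(3) K(1) by (simp add: le_antisym)
      have "\<exists>f. inj_on f K \<and> (\<forall>j\<in>K. f j \<in> A j)"
      proof (rule less.hyps)
        show "card K < card I" using K less.prems(1) by (meson psubsetI psubset_card_mono)
        show "finite K" by fact
        show "\<forall>i\<in>K. finite (A i)" using K(1) less.prems(2) by blast
        show "\<forall>L\<subseteq>K. card L \<le> card (\<Union>(A ` L))" using K(1) less.prems(3) by auto
      qed
      then obtain f1 where f1: "inj_on f1 K" "\<forall>j\<in>K. f1 j \<in> A j" by auto
      define A'' where "A'' = (\<lambda>j. A j - \<Union>(A ` K))"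
      have "\<exists>f. inj_on f (I - K) \<and> (\<forall>j\<in>I - K. f j \<in> A'' j)"
      proof (rule less.hyps)
        show "card (I - K) < card I" using K less.prems(1)
          proof -
          have "card K > 0" using fK K(2) by (simp add: card_gt_0_iff)
          moreover have "card (I - K) = card I - card K" using fK K(1) by (simp add: card_Diff_subset)
          moreover have "card K \<le> card I" using K(1) less.prems(1) by (simp add: card_mono)
          ultimately show ?thesis by linarith
        qed
        show "finite (I - K)" using less.prems(1) by simp
        show "\<forall>i\<in>I - K. finite (A'' i)" using less.prems(2) by (simp add: A''_def)
        show "\<forall>L\<subseteq>I - K. card L \<le> card (\<Union>(A'' ` L))"
        proof (intro allI impI)
          fix L assume L: "L \<subseteq> I - K"
          have fL: "finite L" using L less.prems(1) finite_subset by blast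
          have "card (L \<union> K) \<le> card (\<Union>(A ` (L \<union> K)))" proof -
            have "L \<union> K \<subseteq> I" using L K(1) by blast
            from less.prems(3)[rule_format, OF this] show ?thesis by (simp add: image_Un)
          qed
          moreover have "card (L \<union> K) = card L + card K" using L fL fK
            by (subst card_Un_disjoint) auto
          moreover have "\<Union>(A'' ` L) = \<Union>(A ` (L \<union> K)) - \<Union>(A ` K)" by (auto simp: A''_def)
          moreover have "card (\<Union>(A ` (L \<union> K)) - \<Union>(A ` K)) = card (\<Union>(A ` (L \<union> K))) - card (\<Union>(A ` K))"
            by (rule card_Diff_subset) (use fUK in auto)
          ultimately show "card L \<le> card (\<Union>(A'' ` L))" using cK by simp
        qed
      qed
      then obtain f2 where f2: "inj_on f2 (I - K)" "\<forall>j\<in>I - K. f2 j \<in> A'' j" by auto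
      define g where "g = (\<lambda>j. if j \<in> K then f1 j else f2 j)"
      have "inj_on g I"
        unfolding inj_on_def
      proof (intro ballI impI)
        fix a b assume ab: "a \<in> I" "b \<in> I" "g a = g b"
        show "a = b"
        proof (cases "a \<in> K"; cases "b \<in> K")
          assume "a \<in> K" "b \<in> K" then show ?thesis using ab f1(1) by (auto simp: g_def inj_on_def)
        next
          assume "a \<notin> K" "b \<notin> K" then show ?thesis using ab f2(1) by (auto simp: g_def inj_on_def)
        next
          assume "a \<in> K" "b \<notin> K" then show ?thesis using ab f1(2) f2(2)
            by (auto simp: g_def A''_def)
        next
          assume "a \<notin> K" "b \<in> K"
          then have "f2 a \<notin> A b" using f2(2) ab(1) by (auto simp: A''_def)
          moreover have "f1 b \<in> A b" using f1(2) \<open>b \<in> K\<close> by blast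
          moreover have "f2 a = f1 b" using ab(3) \<open>a \<notin> K\<close> \<open>b \<in> K\<close> by (simp add: g_def)
          ultimately show ?thesis by simp
        qed
      qed
      moreover have "\<forall>j\<in>I. g j \<in> A j" using f1(2) f2(2) by (auto simp: g_def A''_def)
      ultimately show ?thesis by blast
    qed
  qed
qed




definition closedin :: "('a \<Rightarrow> 'a \<Rightarrow> nat) \<Rightarrow> 'a set \<Rightarrow> 'a set \<Rightarrow> bool" where
  "closedin m X C \<longleftrightarrow> (\<forall>u\<in>C. \<forall>v\<in>X - C. m u v = 0)"

definition barrier :: "('a \<Rightarrow> 'a \<Rightarrow> nat) \<Rightarrow> 'a set \<Rightarrow> 'a set \<Rightarrow> 'a set set \<Rightarrow> bool" where
  "barrier m W S P \<longleftrightarrow> S \<subseteq> W \<and> (\<forall>C\<in>P. C \<subseteq> W - S \<and> odd (card C) \<and> closedin m (W - S) C)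
     \<and> (\<forall>C\<in>P. \<forall>C'\<in>P. C \<noteq> C' \<longrightarrow> C \<inter> C' = {})"

definition pmf :: "('a \<Rightarrow> 'a \<Rightarrow> nat) \<Rightarrow> 'a set \<Rightarrow> ('a \<Rightarrow> 'a) \<Rightarrow> bool" where
  "pmf m W \<mu> \<longleftrightarrow> (\<forall>x\<in>W. \<mu> x \<in> W \<and> \<mu> x \<noteq> x \<and> \<mu> (\<mu> x) = x \<and> 0 < m x (\<mu> x))"

lemma closedin_mono: "closedin m X C \<Longrightarrow> Y \<subseteq> X \<Longrightarrow> closedin m Y C"
  unfolding closedin_def by blast

lemma barrier_finite:
  assumes "finite W" "barrier m W S P"
  shows "finite P" "\<And>C. C \<in> P \<Longrightarrow> finite C"
proof -
  have "P \<subseteq> Pow W" using assms(2) unfolding barrier_def by blast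
  then show "finite P" using assms(1) by (meson finite_Pow_iff finite_subset)
  show "\<And>C. C \<in> P \<Longrightarrow> finite C" using assms unfolding barrier_def
    by (meson Diff_subset finite_subset)
qed

lemma barrier_odd: "barrier m W S P \<Longrightarrow> C \<in> P \<Longrightarrow> odd (card C)"
  unfolding barrier_def by blast

lemma barrier_nonempty: "barrier m W S P \<Longrightarrow> C \<in> P \<Longrightarrow> C \<noteq> {}"
  using barrier_odd by fastforce

lemma barrier_card_Union:
  assumes "finite W" "barrier m W S P"
  shows "card (\<Union>P) = (\<Sum>C\<in>P. card C)" "even (card (\<Union>P) + card P)"
proof -
  show 1: "card (\<Union>P) = (\<Sum>C\<in>P. card C)"
    apply (rule card_Union_disjoint)
    using assms barrier_finite[OF assms] unfolding barrier_def pairwise_def disjnt_def by auto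
  have "even (\<Sum>C\<in>P. card C + 1)"
    apply (rule dvd_sum) using assms(2) unfolding barrier_def by auto
  moreover have "(\<Sum>C\<in>P. card C + 1) = (\<Sum>C\<in>P. card C) + card P"
    by (subst sum.distrib) simp
  ultimately show "even (card (\<Union>P) + card P)" using 1 by simp
qed

lemma barrier_Union_sub: "barrier m W S P \<Longrightarrow> \<Union>P \<subseteq> W - S"
  unfolding barrier_def by blast

lemma card_W_split:
  assumes "finite W" "barrier m W S P"
  shows "card W = card S + card (\<Union>P) + card (W - S - \<Union>P)"
proof -
  have S: "S \<subseteq> W" using assms(2) unfolding barrier_def by blast
  have U: "\<Union>P \<subseteq> W - S" using barrier_Union_sub[OF assms(2)] .
  have fS: "finite S" by (rule finite_subset[OF S assms(1)])
  have fU: "finite (\<Union>P)" by (rule finite_subset[OF U]) (use assms(1) in simp)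
  have "card (W - S) = card W - card S" using S fS by (simp add: card_Diff_subset)
  moreover have "card S \<le> card W" using S assms(1) by (simp add: card_mono)
  ultimately have "card W = card S + card (W - S)" by simp
  moreover have "card (W - S - \<Union>P) = card (W - S) - card (\<Union>P)" using U fU by (simp add: card_Diff_subset)
  moreover have "card (\<Union>P) \<le> card (W - S)" using U assms(1) by (simp add: card_mono)
  ultimately show ?thesis by simp
qed

lemma barrier_parity_extend:
  assumes sym: "\<forall>u v. m u v = m v u" and fin: "finite X" and ev: "even (card X)"
    and b: "barrier m X T Q" and lt: "card T < card Q"
  shows "\<exists>Q'. barrier m X T Q' \<and> card T + 2 \<le> card Q'"
proof -
  define R where "R = X - T - \<Union>Q"
  have split: "card X = card T + card (\<Union>Q) + card R" using card_W_split[OF fin b] R_def by simp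
  have par: "even (card (\<Union>Q) + card Q)" using barrier_card_Union[OF fin b] by simp
  have fQ: "finite Q" using barrier_finite[OF fin b] by simp
  have bT: "T \<subseteq> X" and bQ: "\<And>C. C \<in> Q \<Longrightarrow> C \<subseteq> X - T \<and> odd (card C) \<and> closedin m (X - T) C"
    and bD: "\<And>C C'. C \<in> Q \<Longrightarrow> C' \<in> Q \<Longrightarrow> C \<noteq> C' \<Longrightarrow> C \<inter> C' = {}"
    using b unfolding barrier_def by auto
  show ?thesis
  proof (cases "even (card R)")
    case True
    then have "even (card T + card Q)" using split par ev by presburger
    then have "card T + 2 \<le> card Q" using lt by presburger
    then show ?thesis using b by blast
  next
    case False
    define Q' where "Q' = insert R Q"
    have Rne: "R \<noteq> {}" using False by auto
    have RnQ: "R \<notin> Q"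
    proof
      assume "R \<in> Q"
      then have "R \<subseteq> \<Union>Q" by blast
      then show False using Rne unfolding R_def by blast
    qed
    have Rcl: "closedin m (X - T) R"
      unfolding closedin_def
    proof (intro ballI)
      fix u v assume u: "u \<in> R" and v: "v \<in> X - T - R"
      then obtain D where D: "D \<in> Q" "v \<in> D" unfolding R_def by blast
      have "u \<in> X - T - D" using u D unfolding R_def by blast
      then have "m v u = 0" using bQ[OF D(1)] D(2) unfolding closedin_def by blast
      then show "m u v = 0" using sym by metis
    qed
    have "barrier m X T Q'"
      unfolding barrier_def Q'_def
    proof (intro conjI ballI impI)
      show "T \<subseteq> X" by (rule bT)
    next
      fix C assume C: "C \<in> insert R Q"
      show "C \<subseteq> X - T"
        using C bQ unfolding R_def by blast
      show "odd (card C)" using C bQ False by blast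
      show "closedin m (X - T) C"
        using C bQ Rcl by blast
    next
      fix C C' assume CC: "C \<in> insert R Q" "C' \<in> insert R Q" "C \<noteq> C'"
      have Rd: "\<And>D. D \<in> Q \<Longrightarrow> R \<inter> D = {}" unfolding R_def by blast
      show "C \<inter> C' = {}" using CC bD Rd by blast
    qed
    moreover have cQ': "card Q' = card Q + 1" using fQ RnQ by (simp add: Q'_def)
    moreover have "even (card T + card Q')" using split par ev False cQ' by presburger
    ultimately show ?thesis using lt cQ' by (intro exI[of _ Q']) presburger
  qed
qed




theorem tutte:
  assumes sym: "\<forall>u v. m u v = m v u"
  shows "finite W \<Longrightarrow> (\<forall>S P. barrier m W S P \<longrightarrow> card P \<le> card S) \<Longrightarrow> \<exists>\<mu>. pmf m W \<mu>"
proof (induction "card W" arbitrary: W rule: less_induct)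
  case less
  note fin = less.prems(1) and tc = less.prems(2)
  have evW: "even (card W)"
  proof (rule ccontr)
    assume o: "odd (card W)"
    have "barrier m W {} {W}" unfolding barrier_def closedin_def using o by auto
    then have "card {W} \<le> card ({}::'a set)" using tc by blast
    then show False by simp
  qed
  define SS where "SS = (\<lambda>S. \<exists>P. barrier m W S P \<and> card S \<le> card P)"
  have "barrier m W {} {}" unfolding barrier_def by simp
  then have SS0: "SS {}" unfolding SS_def by (intro exI[of _ "{}"]) simp
  have bnd: "\<forall>S. SS S \<longrightarrow> card S < card W + 1"
  proof (intro allI impI)
    fix S assume "SS S"
    then have "S \<subseteq> W" unfolding SS_def barrier_def by blast
    then show "card S < card W + 1" using card_mono[OF fin] by (simp add: le_imp_less_Suc)
  qed
  obtain S where SSS: "SS S" and Smax: "\<forall>S'. SS S' \<longrightarrow> card S' \<le> card S"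
    using Lattices_Big.ex_has_greatest_nat[of SS "{}" card "card W + 1", OF SS0 bnd] by blast
  obtain P where bP: "barrier m W S P" and cSP: "card S \<le> card P" using SSS unfolding SS_def by blast
  have cPS: "card P = card S" using tc bP cSP by (simp add: le_antisym)
  have SW: "S \<subseteq> W" and Pp: "\<And>C. C \<in> P \<Longrightarrow> C \<subseteq> W - S \<and> odd (card C) \<and> closedin m (W - S) C"
    and Pd: "\<And>C C'. C \<in> P \<Longrightarrow> C' \<in> P \<Longrightarrow> C \<noteq> C' \<Longrightarrow> C \<inter> C' = {}"
    using bP unfolding barrier_def by auto
  have fS: "finite S" by (rule finite_subset[OF SW fin])
  have fP: "finite P" and fC: "\<And>C. C \<in> P \<Longrightarrow> finite C" using barrier_finite[OF fin bP] by auto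

  have Rem: "W - S - \<Union>P = {}"
  proof (rule ccontr)
    define R where "R = W - S - \<Union>P"
    assume "W - S - \<Union>P \<noteq> {}"
    then obtain v where v: "v \<in> R" unfolding R_def by blast
    have split: "card W = card S + card (\<Union>P) + card R" using card_W_split[OF fin bP] R_def by simp
    have par: "even (card (\<Union>P) + card P)" using barrier_card_Union[OF fin bP] by simp
    have evR: "even (card R)" using split par evW cPS by presburger
    have fR: "finite R" unfolding R_def using fin by simp
    define R' where "R' = R - {v}"
    have cR': "card R' = card R - 1" using v fR by (simp add: R'_def)
    have cR1: "card R \<ge> 1" using v fR by (metis One_nat_def Suc_leI card_gt_0_iff empty_iff)
    have oR': "odd (card R')" using cR' cR1 evR by presburger
    have R'ne: "R' \<noteq> {}" using oR' by auto
    have R'P: "\<And>D. D \<in> P \<Longrightarrow> R' \<inter> D = {}" unfolding R'_def R_def by blast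
    have R'nP: "R' \<notin> P" using R'P R'ne by blast
    define S' where "S' = insert v S"
    define P' where "P' = insert R' P"
    have "barrier m W S' P'"
      unfolding barrier_def
    proof (intro conjI ballI impI)
      show "S' \<subseteq> W" using SW v unfolding S'_def R_def by blast
    next
      fix C assume C: "C \<in> P'"
      show "C \<subseteq> W - S'"
      proof (cases "C = R'")
        case True then show ?thesis unfolding S'_def R'_def R_def by blast
      next
        case False
        then have "C \<in> P" using C P'_def by blast
        then show ?thesis using Pp v unfolding S'_def R_def by blast
      qed
      show "odd (card C)" using C oR' Pp unfolding P'_def by blast
      show "closedin m (W - S') C"
      proof (cases "C = R'")
        case True
        show ?thesis unfolding closedin_def
        proof (intro ballI)
          fix x w assume x: "x \<in> C" and w: "w \<in> W - S' - C"
          then obtain D where D: "D \<in> P" "w \<in> D" unfolding True S'_def R'_def R_def by blast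
          have "x \<in> W - S - D" using x True D(1) unfolding R'_def R_def by blast
          then have "m w x = 0" using Pp[OF D(1)] D(2) unfolding closedin_def by blast
          then show "m x w = 0" using sym by metis
        qed
      next
        case False
        then have "C \<in> P" using C P'_def by blast
        then show ?thesis using Pp closedin_mono[of m "W - S" C "W - S'"] unfolding S'_def by blast
      qed
    next
      fix C C' assume "C \<in> P'" "C' \<in> P'" "C \<noteq> C'"
      then show "C \<inter> C' = {}" unfolding P'_def using Pd R'P by blast
    qed
    moreover have "card P' = card P + 1" unfolding P'_def using fP R'nP by simp
    moreover have "card S' = card S + 1" unfolding S'_def using fS v R_def by simp
    ultimately have "SS S'" unfolding SS_def using cPS by (metis order_refl)
    then have "card S' \<le> card S" using Smax by blast
    then show False using \<open>card S' = card S + 1\<close> by simp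
  qed

  have fc: "\<forall>C\<in>P. \<forall>v\<in>C. \<exists>\<mu>. pmf m (C - {v}) \<mu>"
  proof (intro ballI)
    fix C v assume C: "C \<in> P" and v: "v \<in> C"
    have CS: "C \<subseteq> W - S" and oC: "odd (card C)" and clC: "closedin m (W - S) C" using Pp[OF C] by auto
    have fCv: "finite C" using fC[OF C] .
    show "\<exists>\<mu>. pmf m (C - {v}) \<mu>"
    proof (rule less.hyps)
      have "card (C - {v}) < card C" using fCv v by (rule card_Diff1_less)
      moreover have "card C \<le> card W" using CS fin by (meson Diff_subset card_mono subset_trans)
      ultimately show "card (C - {v}) < card W" by simp
      show "finite (C - {v})" using fCv by simp
      show "\<forall>T Q. barrier m (C - {v}) T Q \<longrightarrow> card Q \<le> card T"
      proof (intro allI impI, rule ccontr)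
        fix T Q assume bTQ: "barrier m (C - {v}) T Q" and nle: "\<not> card Q \<le> card T"
        have evCv: "even (card (C - {v}))" using oC v fCv by (simp add: card_Diff_singleton)
        obtain Q' where bQ': "barrier m (C - {v}) T Q'" and c2: "card T + 2 \<le> card Q'"
          using barrier_parity_extend[OF sym _ evCv bTQ] fCv nle by auto
        have TC: "T \<subseteq> C - {v}" and Qp: "\<And>D. D \<in> Q' \<Longrightarrow> D \<subseteq> C - {v} - T \<and> odd (card D) \<and> closedin m (C - {v} - T) D"
          and Qd: "\<And>D D'. D \<in> Q' \<Longrightarrow> D' \<in> Q' \<Longrightarrow> D \<noteq> D' \<Longrightarrow> D \<inter> D' = {}"
          using bQ' unfolding barrier_def by auto
        have fQ': "finite Q'" using barrier_finite[OF _ bQ'] fCv by simp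
        have fT: "finite T" using TC fCv finite_subset by (metis finite_Diff)
        define S'' where "S'' = S \<union> insert v T"
        define P'' where "P'' = (P - {C}) \<union> Q'"
        have PC_D: "\<And>D. D \<in> P - {C} \<Longrightarrow> D \<inter> C = {}" using Pd C by blast
        have Qne: "\<And>D. D \<in> Q' \<Longrightarrow> D \<noteq> {}" using barrier_nonempty[OF bQ'] by blast
        have "barrier m W S'' P''"
          unfolding barrier_def
        proof (intro conjI ballI impI)
          show "S'' \<subseteq> W" unfolding S''_def using SW TC CS v by blast
        next
          fix D assume D: "D \<in> P''"
          show "D \<subseteq> W - S''"
          proof (cases "D \<in> Q'")
            case True then show ?thesis using Qp[OF True] CS unfolding S''_def by blast
          next
            case False
            then have D1: "D \<in> P - {C}" using D P''_def by blast
            then show ?thesis using Pp PC_D[OF D1] TC v unfolding S''_def by blast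
          qed
          show "odd (card D)" using D Pp Qp unfolding P''_def by blast
          show "closedin m (W - S'') D"
          proof (cases "D \<in> Q'")
            case True
            show ?thesis unfolding closedin_def
            proof (intro ballI)
              fix x w assume x: "x \<in> D" and w: "w \<in> W - S'' - D"
              show "m x w = 0"
              proof (cases "w \<in> C")
                case True
                then have "w \<in> C - {v} - T - D" using w unfolding S''_def by blast
                then show ?thesis using Qp[OF \<open>D \<in> Q'\<close>] x unfolding closedin_def by blast
              next
                case False
                then have "w \<in> W - S - C" using w unfolding S''_def by blast
                moreover have "x \<in> C" using x Qp[OF \<open>D \<in> Q'\<close>] by blast
                ultimately show ?thesis using clC unfolding closedin_def by blast
              qed
            qed
          next
            case False
            then have D1: "D \<in> P" using D P''_def by blast
            then show ?thesis using Pp closedin_mono[of m "W - S" D "W - S''"] unfolding S''_def by blast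
          qed
        next
          fix D D' assume DD: "D \<in> P''" "D' \<in> P''" "D \<noteq> D'"
          have QC: "\<And>D. D \<in> Q' \<Longrightarrow> D \<subseteq> C" using Qp by blast
          show "D \<inter> D' = {}" using DD Pd Qd PC_D QC unfolding P''_def by blast
        qed
        moreover have "card S'' = card S + 1 + card T"
        proof -
          have "S \<inter> insert v T = {}" using CS TC v by blast
          then have "card S'' = card S + card (insert v T)" unfolding S''_def
            using fS fT by (subst card_Un_disjoint) auto
          moreover have "v \<notin> T" using TC by blast
          then have "card (insert v T) = card T + 1" using fT by simp
          ultimately show ?thesis by simp
        qed
        moreover have "card P'' = card P - 1 + card Q'"
        proof -
          have "(P - {C}) \<inter> Q' = {}"
          proof (rule ccontr)
            assume "(P - {C}) \<inter> Q' \<noteq> {}"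
            then obtain D where D: "D \<in> P - {C}" "D \<in> Q'" by blast
            then have "D \<subseteq> C" using Qp by blast
            then show False using PC_D[OF D(1)] Qne[OF D(2)] by blast
          qed
          then have "card P'' = card (P - {C}) + card Q'" unfolding P''_def
            using fP fQ' by (simp add: card_Un_disjoint)
          moreover have "card (P - {C}) = card P - 1" using C fP by simp
          ultimately show ?thesis by simp
        qed
        moreover have "card P \<ge> 1" using C fP by (metis One_nat_def Suc_leI card_gt_0_iff empty_iff)
        ultimately have "SS S''" unfolding SS_def using cPS c2 by (intro exI[of _ P'']) simp
        then have "card S'' \<le> card S" using Smax by blast
        then show False using \<open>card S'' = card S + 1 + card T\<close> by simp
      qed
    qed
  qed

  define N where "N = (\<lambda>C. {x \<in> S. \<exists>u\<in>C. 0 < m u x})"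
  have "\<exists>f. inj_on f P \<and> (\<forall>C\<in>P. f C \<in> N C)"
  proof (rule hall)
    show "finite P" by (rule fP)
    show "\<forall>C\<in>P. finite (N C)" unfolding N_def using fS by simp
    show "\<forall>K\<subseteq>P. card K \<le> card (\<Union>(N ` K))"
    proof (intro allI impI)
      fix K assume KP: "K \<subseteq> P"
      define NK where "NK = \<Union>(N ` K)"
      have NKS: "NK \<subseteq> S" unfolding NK_def N_def by blast
      have "barrier m W NK K"
        unfolding barrier_def
      proof (intro conjI ballI impI)
        show "NK \<subseteq> W" using NKS SW by blast
      next
        fix C assume C: "C \<in> K"
        then have CP: "C \<in> P" using KP by blast
        show "C \<subseteq> W - NK" using Pp[OF CP] NKS by blast
        show "odd (card C)" using Pp[OF CP] by blast
        show "closedin m (W - NK) C"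
          unfolding closedin_def
        proof (intro ballI)
          fix x w assume x: "x \<in> C" and w: "w \<in> W - NK - C"
          show "m x w = 0"
          proof (cases "w \<in> S")
            case True
            show ?thesis
            proof (rule ccontr)
              assume "m x w \<noteq> 0"
              then have "w \<in> N C" unfolding N_def using True x by auto
              then have "w \<in> NK" unfolding NK_def using C by blast
              then show False using w by blast
            qed
          next
            case False
            then have "w \<in> W - S - C" using w by blast
            then show ?thesis using Pp[OF CP] x unfolding closedin_def by blast
          qed
        qed
      next
        fix C C' assume "C \<in> K" "C' \<in> K" "C \<noteq> C'"
        then show "C \<inter> C' = {}" using Pd KP by blast
      qed
      then have "card K \<le> card NK" using tc by blast
      then show "card K \<le> card (\<Union>(N ` K))" unfolding NK_def .
    qed
  qed
  then obtain f where finj: "inj_on f P" and fN: "\<forall>C\<in>P. f C \<in> N C" by blast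
  have fPS: "f ` P = S"
  proof (rule card_subset_eq[OF fS])
    show "f ` P \<subseteq> S" using fN unfolding N_def by blast
    show "card (f ` P) = card S" using finj cPS by (simp add: card_image)
  qed
  have "\<forall>C\<in>P. \<exists>x. x \<in> C \<and> 0 < m x (f C)" using fN unfolding N_def by blast
  then obtain u where u: "\<forall>C\<in>P. u C \<in> C \<and> 0 < m (u C) (f C)" by (metis bchoice)
  have "\<forall>C\<in>P. \<exists>\<mu>. pmf m (C - {u C}) \<mu>" using fc u by blast
  then obtain \<mu>C where \<mu>C: "\<forall>C\<in>P. pmf m (C - {u C}) (\<mu>C C)" by (metis bchoice)
  define pc where "pc = (\<lambda>x. SOME C. C \<in> P \<and> x \<in> C)"
  have pc_eq: "\<And>C x. C \<in> P \<Longrightarrow> x \<in> C \<Longrightarrow> pc x = C"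
  proof -
    fix C x assume C: "C \<in> P" and x: "x \<in> C"
    have "pc x \<in> P \<and> x \<in> pc x" unfolding pc_def by (rule someI[of _ C]) (use C x in blast)
    then show "pc x = C" using Pd C x by blast
  qed
  define g where "g = inv_into P f"
  have g1: "\<And>C. C \<in> P \<Longrightarrow> g (f C) = C" unfolding g_def using finj by (simp add: inv_into_f_f)
  have g2: "\<And>x. x \<in> S \<Longrightarrow> g x \<in> P \<and> f (g x) = x" unfolding g_def using fPS
    by (metis f_inv_into_f inv_into_into)
  define \<mu> where "\<mu> = (\<lambda>x. if x \<in> S then u (g x) else if x = u (pc x) then f (pc x) else \<mu>C (pc x) x)"
  have "pmf m W \<mu>"
    unfolding pmf_def
  proof (intro ballI)
    fix x assume xW: "x \<in> W"
    show "\<mu> x \<in> W \<and> \<mu> x \<noteq> x \<and> \<mu> (\<mu> x) = x \<and> 0 < m x (\<mu> x)"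
    proof (cases "x \<in> S")
      case True
      define C where "C = g x"
      have C: "C \<in> P" "f C = x" using g2[OF True] C_def by auto
      have uC: "u C \<in> C" "0 < m (u C) (f C)" using u C(1) by auto
      have uCnS: "u C \<notin> S" using uC(1) Pp[OF C(1)] by blast
      have mx: "\<mu> x = u C" unfolding \<mu>_def C_def using True by simp
      have "pc (u C) = C" using pc_eq[OF C(1) uC(1)] .
      then have "\<mu> (u C) = f C" unfolding \<mu>_def using uCnS by simp
      moreover have "u C \<in> W" using uC(1) Pp[OF C(1)] by blast
      moreover have "0 < m x (u C)" using uC(2) C(2) sym by metis
      ultimately show ?thesis using mx C(2) uCnS True by auto
    next
      case False
      then obtain C where C: "C \<in> P" "x \<in> C" using Rem xW by blast
      have pcx: "pc x = C" using pc_eq[OF C] .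
      have uC: "u C \<in> C" "0 < m (u C) (f C)" using u C(1) by auto
      have fCS: "f C \<in> S" using fPS C(1) by blast
      show ?thesis
      proof (cases "x = u C")
        case True
        have mx: "\<mu> x = f C" unfolding \<mu>_def using False True pcx by simp
        have "\<mu> (f C) = u C" unfolding \<mu>_def using fCS g1[OF C(1)] by simp
        then show ?thesis using mx True fCS SW False uC(2) by auto
      next
        case xu: False
        have pm: "pmf m (C - {u C}) (\<mu>C C)" using \<mu>C C(1) by blast
        have xin: "x \<in> C - {u C}" using C(2) xu by blast
        have mx: "\<mu> x = \<mu>C C x" unfolding \<mu>_def using False xu pcx by simp
        have y: "\<mu>C C x \<in> C - {u C}" "\<mu>C C x \<noteq> x" "\<mu>C C (\<mu>C C x) = x" "0 < m x (\<mu>C C x)"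
          using pm xin unfolding pmf_def by auto
        have yS: "\<mu>C C x \<notin> S" using y(1) Pp[OF C(1)] by blast
        have pcy: "pc (\<mu>C C x) = C" using pc_eq[OF C(1)] y(1) by blast
        have "\<mu> (\<mu>C C x) = \<mu>C C (\<mu>C C x)" unfolding \<mu>_def using yS pcy y(1) by simp
        moreover have "\<mu>C C x \<in> W" using y(1) Pp[OF C(1)] by blast
        ultimately show ?thesis using mx y by auto
      qed
    qed
  qed
  then show ?case by blast
qed

lemma tutte_barrier:
  assumes sym: "\<forall>u v. m u v = m v u" and fin: "finite W" and ev: "even (card W)"
    and np: "\<not> (\<exists>\<mu>. pmf m W \<mu>)"
  shows "\<exists>S P. barrier m W S P \<and> card S + 2 \<le> card P"
proof -
  obtain S P where b: "barrier m W S P" and lt: "card S < card P"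
    using tutte[OF sym fin] np by (meson not_le)
  then show ?thesis using barrier_parity_extend[OF sym fin ev b lt] by blast
qed




definition II :: "('a \<Rightarrow> 'a \<Rightarrow> nat) \<Rightarrow> 'a set \<Rightarrow> nat" where
  "II m X = (\<Sum>u\<in>X. \<Sum>v\<in>X. m u v)"

definition vol :: "'a set \<Rightarrow> ('a \<Rightarrow> 'a \<Rightarrow> nat) \<Rightarrow> 'a set \<Rightarrow> nat" where
  "vol V m X = (\<Sum>x\<in>X. deg V m x)"

lemma mg_facts:
  assumes "multigraph V m"
  shows "finite V" "\<And>u v. m u v = m v u" "\<And>u. m u u = 0" "\<And>u v. u \<notin> V \<Longrightarrow> m u v = 0"
    "\<And>u v. v \<notin> V \<Longrightarrow> m u v = 0"
  using assms unfolding multigraph_def by auto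

lemma vol_split:
  assumes "finite V" "X \<subseteq> V"
  shows "vol V m X = II m X + cobound V m X"
proof -
  have fX: "finite X" using assms finite_subset by blast
  have "\<And>x. deg V m x = (\<Sum>v\<in>X. m x v) + (\<Sum>v\<in>V - X. m x v)"
    unfolding deg_def using assms sum.subset_diff[of X V] by (simp add: add.commute)
  then have "vol V m X = (\<Sum>x\<in>X. (\<Sum>v\<in>X. m x v) + (\<Sum>v\<in>V - X. m x v))"
    unfolding vol_def by simp
  also have "\<dots> = II m X + cobound V m X" unfolding II_def cobound_def by (simp add: sum.distrib)
  finally show ?thesis .
qed

lemma II_even:
  assumes sym: "\<And>u v. m u v = m v u" and loop: "\<And>u. m u u = 0" and fin: "finite X"
  shows "even (II m X)"
  using fin
proof (induction X rule: finite_induct)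
  case empty then show ?case by (simp add: II_def)
next
  case (insert x F)
  have "II m (insert x F) = II m F + 2 * (\<Sum>v\<in>F. m x v) + m x x"
  proof -
    have "II m (insert x F) = (\<Sum>v\<in>insert x F. m x v) + (\<Sum>u\<in>F. \<Sum>v\<in>insert x F. m u v)"
      unfolding II_def using insert by simp
    also have "\<dots> = (m x x + (\<Sum>v\<in>F. m x v)) + (\<Sum>u\<in>F. m u x + (\<Sum>v\<in>F. m u v))"
      using insert by simp
    also have "\<dots> = m x x + (\<Sum>v\<in>F. m x v) + (\<Sum>u\<in>F. m u x) + II m F"
      unfolding II_def by (simp add: sum.distrib)
    also have "(\<Sum>u\<in>F. m u x) = (\<Sum>v\<in>F. m x v)" using sym by simp
    finally show ?thesis by simp
  qed
  then show ?case using insert loop by simp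
qed

lemma esize_II:
  assumes "even (II m X)"
  shows "2 * esize m X = II m X"
  using assms unfolding esize_def II_def by simp

lemma cobound_compl:
  assumes sym: "\<And>u v. m u v = m v u" and "X \<subseteq> V"
  shows "cobound V m (V - X) = cobound V m X"
proof -
  have "V - (V - X) = X" using assms(2) by blast
  then have "cobound V m (V - X) = (\<Sum>u\<in>V - X. \<Sum>v\<in>X. m u v)" unfolding cobound_def by simp
  also have "\<dots> = (\<Sum>v\<in>X. \<Sum>u\<in>V - X. m u v)" by (rule sum.swap)
  also have "\<dots> = cobound V m X" unfolding cobound_def using sym by simp
  finally show ?thesis .
qed

lemma cobound_single:
  assumes "finite V" "v \<in> V" "m v v = 0"
  shows "cobound V m {v} = deg V m v"
proof -
  have "deg V m v = m v v + (\<Sum>w\<in>V - {v}. m v w)" unfolding deg_def using sum.remove[OF assms(1,2), of "m v"] by simp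
  then show ?thesis unfolding cobound_def using assms by simp
qed

lemma sum_cobound_le:
  assumes fin: "finite V" and sym: "\<And>u v. m u v = m v u" and SV: "S \<subseteq> V"
    and Pp: "\<And>C. C \<in> P \<Longrightarrow> C \<subseteq> V - S \<and> closedin m (V - S) C"
    and Pd: "\<And>C C'. C \<in> P \<Longrightarrow> C' \<in> P \<Longrightarrow> C \<noteq> C' \<Longrightarrow> C \<inter> C' = {}"
  shows "(\<Sum>C\<in>P. cobound V m C) \<le> vol V m S"
proof -
  define h where "h = (\<lambda>u. \<Sum>v\<in>S. m u v)"
  have fP: "finite P"
  proof -
    have "P \<subseteq> Pow V" using Pp by blast
    then show ?thesis using fin by (meson finite_Pow_iff finite_subset)
  qed
  have fC: "\<And>C. C \<in> P \<Longrightarrow> finite C" using Pp fin by (meson Diff_subset finite_subset subset_trans)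
  have cb: "\<And>C. C \<in> P \<Longrightarrow> cobound V m C = (\<Sum>u\<in>C. h u)"
  proof -
    fix C assume C: "C \<in> P"
    have CV: "C \<subseteq> V - S" and cl: "closedin m (V - S) C" using Pp[OF C] by auto
    have "\<And>u. u \<in> C \<Longrightarrow> (\<Sum>v\<in>V - C. m u v) = h u"
    proof -
      fix u assume u: "u \<in> C"
      have "V - C = S \<union> (V - S - C)" using CV SV by blast
      moreover have "S \<inter> (V - S - C) = {}" by blast
      moreover have "finite S" "finite (V - S - C)" using SV fin finite_subset by auto
      ultimately have "(\<Sum>v\<in>V - C. m u v) = (\<Sum>v\<in>S. m u v) + (\<Sum>v\<in>V - S - C. m u v)"
        by (simp add: sum.union_disjoint)
      moreover have "(\<Sum>v\<in>V - S - C. m u v) = 0" using cl u unfolding closedin_def by simp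
      ultimately show "(\<Sum>v\<in>V - C. m u v) = h u" unfolding h_def by simp
    qed
    then show "cobound V m C = (\<Sum>u\<in>C. h u)" unfolding cobound_def by simp
  qed
  have "(\<Sum>C\<in>P. cobound V m C) = (\<Sum>C\<in>P. \<Sum>u\<in>C. h u)" using cb by simp
  also have "\<dots> = (\<Sum>u\<in>\<Union>P. h u)"
    using sum.Union_disjoint[of P h] fC Pd by (simp add: comp_def)
  also have "\<dots> \<le> (\<Sum>u\<in>V. h u)"
    by (rule sum_mono2) (use fin Pp in auto)
  also have "\<dots> = (\<Sum>v\<in>S. \<Sum>u\<in>V. m u v)" unfolding h_def by (rule sum.swap)
  also have "\<dots> = vol V m S" unfolding vol_def deg_def using sym by simp
  finally show ?thesis .
qed

lemma pmf_hpm: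
  assumes "pmf m W \<mu>"
  shows "has_perfect_matching m W"
proof -
  define M where "M = {{x, \<mu> x} | x. x \<in> W}"
  have P: "\<And>x. x \<in> W \<Longrightarrow> \<mu> x \<in> W \<and> \<mu> x \<noteq> x \<and> \<mu> (\<mu> x) = x \<and> 0 < m x (\<mu> x)"
    using assms unfolding pmf_def by blast
  show ?thesis
    unfolding has_perfect_matching_def
  proof (intro exI[of _ M] conjI ballI impI)
    fix e assume "e \<in> M"
    then obtain x where x: "x \<in> W" "e = {x, \<mu> x}" unfolding M_def by blast
    have xx: "x \<noteq> \<mu> x" "\<mu> x \<in> W" "0 < m x (\<mu> x)" using P[OF x(1)] by auto
    show "\<exists>u v. e = {u, v} \<and> u \<noteq> v \<and> u \<in> W \<and> v \<in> W \<and> 0 < m u v"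
      using xx x by blast
  next
    fix e e' assume ee: "e \<in> M" "e' \<in> M" "e \<noteq> e'"
    obtain x where x: "x \<in> W" "e = {x, \<mu> x}" using ee(1) unfolding M_def by blast
    obtain y where y: "y \<in> W" "e' = {y, \<mu> y}" using ee(2) unfolding M_def by blast
    show "e \<inter> e' = {}"
    proof (rule ccontr)
      assume "e \<inter> e' \<noteq> {}"
      then have "x = y \<or> x = \<mu> y \<or> \<mu> x = y \<or> \<mu> x = \<mu> y" using x y by blast
      moreover have "\<mu> (\<mu> x) = x" using P[OF x(1)] by blast
      moreover have "\<mu> (\<mu> y) = y" using P[OF y(1)] by blast
      ultimately have "(x = y \<and> \<mu> x = \<mu> y) \<or> (x = \<mu> y \<and> \<mu> x = y)" by metis
      then have "{x, \<mu> x} = {y, \<mu> y}" by (metis insert_commute)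
      then have "e = e'" using x y by simp
      then show False using ee(3) by simp
    qed
  next
    show "\<Union>M = W"
    proof
      show "\<Union>M \<subseteq> W"
      proof
        fix z assume "z \<in> \<Union>M"
        then obtain x where x: "x \<in> W" "z \<in> {x, \<mu> x}" unfolding M_def by blast
        then show "z \<in> W" using P[OF x(1)] by blast
      qed
      show "W \<subseteq> \<Union>M" unfolding M_def by blast
    qed
  qed
qed




locale S9 =
  fixes V :: "'a set" and m :: "'a \<Rightarrow> 'a \<Rightarrow> nat" and s :: 'a and d :: nat
  assumes H: "multigraph V m"
    and p_even: "even (card V)" and p_ge: "card V \<ge> 4"
    and d_ge: "d \<ge> 2"
    and s_in: "s \<in> V" and deg_s: "deg V m s \<le> d"
    and deg_other: "\<forall>v\<in>V - {s}. deg V m v = d \<or> deg V m v = d + 1"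
    and few_high: "card {v \<in> V - {s}. deg V m v = d + 1} \<le> d"
    and some_low: "\<exists>v\<in>V - {s}. deg V m v = d"
    and ex_small: "4 * excess m (V - {s}) (int d) < int (card V)"
    and dom: "slack_dominant V m s d"
begin

definition hi where "hi = {v \<in> V - {s}. deg V m v = d + 1}"

lemma fin: "finite V" using mg_facts(1)[OF H] .
lemma sym: "m u v = m v u" using mg_facts(2)[OF H] .
lemma loop: "m u u = 0" using mg_facts(3)[OF H] .
lemma supp1: "u \<notin> V \<Longrightarrow> m u v = 0" using mg_facts(4)[OF H] .
lemma supp2: "v \<notin> V \<Longrightarrow> m u v = 0" using mg_facts(5)[OF H] .

lemma hi_sub: "hi \<subseteq> V - {s}" unfolding hi_def by blast
lemma h_le: "card hi \<le> d" using few_high unfolding hi_def .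
lemma fin_hi: "finite hi" using hi_sub fin finite_subset by blast

lemma deg_x: "x \<in> V - {s} \<Longrightarrow> deg V m x = d + (if x \<in> hi then 1 else 0)"
  using deg_other unfolding hi_def by auto

lemma deg_x_le: "x \<in> V \<Longrightarrow> deg V m x \<le> d + (if x \<in> hi then 1 else 0)"
proof -
  assume x: "x \<in> V"
  show ?thesis
  proof (cases "x = s")
    case True then show ?thesis using deg_s by simp
  next
    case False then show ?thesis using deg_x x by simp
  qed
qed

lemma sum_ind: "finite X \<Longrightarrow> (\<Sum>x\<in>X. (if x \<in> hi then 1 else 0::nat)) = card (X \<inter> hi)"
proof -
  assume "finite X"
  then have "(\<Sum>x\<in>X. (if x \<in> hi then 1 else 0::nat)) = (\<Sum>x\<in>X \<inter> {x. x \<in> hi}. 1) + (\<Sum>x\<in>X \<inter> - {x. x \<in> hi}. 0)"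
    by (rule sum.If_cases)
  then show ?thesis by simp
qed

lemma vol_low: "X \<subseteq> V - {s} \<Longrightarrow> vol V m X = d * card X + card (X \<inter> hi)"
proof -
  assume X: "X \<subseteq> V - {s}"
  have fX: "finite X" using X fin finite_subset by blast
  have "vol V m X = (\<Sum>x\<in>X. d + (if x \<in> hi then 1 else 0))"
    unfolding vol_def
  proof (rule sum.cong)
    fix x assume "x \<in> X" then show "deg V m x = d + (if x \<in> hi then 1 else 0)" using deg_x X by blast
  qed simp
  also have "\<dots> = d * card X + card (X \<inter> hi)" using sum_ind[OF fX] by (simp add: sum.distrib)
  finally show ?thesis .
qed

lemma vol_le: "X \<subseteq> V \<Longrightarrow> vol V m X \<le> d * card X + card (X \<inter> hi)"
proof -
  assume X: "X \<subseteq> V"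
  have fX: "finite X" using X fin finite_subset by blast
  have "vol V m X \<le> (\<Sum>x\<in>X. d + (if x \<in> hi then 1 else 0))"
    unfolding vol_def
  proof (rule sum_mono)
    fix x assume "x \<in> X" then show "deg V m x \<le> d + (if x \<in> hi then 1 else 0)" using deg_x_le X by blast
  qed
  also have "\<dots> = d * card X + card (X \<inter> hi)" using sum_ind[OF fX] by (simp add: sum.distrib)
  finally show ?thesis .
qed

lemma ms_zero: "deg V m s = 0 \<Longrightarrow> m s w = 0"
proof -
  assume "deg V m s = 0"
  then have "\<forall>w\<in>V. m s w = 0" unfolding deg_def using fin by simp
  then show "m s w = 0" using supp2 by (cases "w \<in> V") auto
qed

lemma II_Vs: "II m (V - {s}) + deg V m s = d * (card V - 1) + card hi"
proof -
  have "vol V m (V - {s}) = II m (V - {s}) + cobound V m (V - {s})"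
    by (rule vol_split) (use fin in auto)
  moreover have "cobound V m (V - {s}) = cobound V m {s}"
    by (rule cobound_compl) (use sym s_in in auto)
  moreover have "cobound V m {s} = deg V m s" by (rule cobound_single) (use fin s_in loop in auto)
  moreover have "vol V m (V - {s}) = d * card (V - {s}) + card ((V - {s}) \<inter> hi)" by (rule vol_low) simp
  moreover have "(V - {s}) \<inter> hi = hi" using hi_sub by blast
  moreover have "card (V - {s}) = card V - 1" using s_in fin by simp
  ultimately show ?thesis by simp
qed

lemma II_even': "X \<subseteq> V \<Longrightarrow> even (II m X)"
  by (rule II_even) (use sym loop fin finite_subset in auto)

lemma esize_eq: "X \<subseteq> V \<Longrightarrow> 2 * esize m X = II m X"
  by (rule esize_II) (rule II_even')

lemma q_ex: obtains q where "card V = 2 * q + 2"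
proof -
  have "card V = 2 * (card V div 2 - 1) + 2" using p_even p_ge by presburger
  then show ?thesis using that by blast
qed

lemma ex_fact: "2 * d + 2 * card hi < card V + 2 * deg V m s"
proof -
  obtain q where q: "card V = 2 * q + 2" using q_ex by blast
  have c: "card (V - {s}) = 2 * q + 1" using q s_in fin by simp
  have E: "2 * esize m (V - {s}) + deg V m s = d * (2 * q + 1) + card hi"
    using esize_eq[of "V - {s}"] II_Vs q by simp
  have Ei: "2 * int (esize m (V - {s})) + int (deg V m s) = 2 * (int d * int q) + int d + int (card hi)"
  proof -
    have "int (2 * esize m (V - {s}) + deg V m s) = int (d * (2 * q + 1) + card hi)" using E by simp
    then show ?thesis by (simp add: algebra_simps)
  qed
  have "(int d * (int (card (V - {s})) - 1)) div 2 = int d * int q"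
    using c by simp
  then have ex: "excess m (V - {s}) (int d) = int (esize m (V - {s})) - int d * int q"
    unfolding excess_def by simp
  have "4 * (int (esize m (V - {s})) - int d * int q) < 2 * int q + 2"
    using ex_small ex q by simp
  then have "int (2 * d + 2 * card hi) < int (card V + 2 * deg V m s)" using Ei q by simp
  then show ?thesis by (simp only: of_nat_less_iff)
qed

lemma star:
  assumes R: "R \<subseteq> V - {s}" "R \<noteq> V - {s}" "odd (card R)" "card R > 1" "cobound V m R \<le> d"
  shows "card V + deg V m s + card (R \<inter> hi) \<le> card R + cobound V m R + card hi"
proof -
  obtain q where q: "card V = 2 * q + 2" using q_ex by blast
  have c: "card (V - {s}) = 2 * q + 1" using q s_in fin by simp
  obtain j where j: "card R = 2 * j + 1" using R(3) oddE by blast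
  have "slack m (V - {s}) (int d) < slack m R (int d)"
    using dom R unfolding slack_dominant_def by blast
  moreover have "slack m (V - {s}) (int d) = int d * int q + int q - int (esize m (V - {s}))"
    unfolding slack_def using c by (simp add: algebra_simps)
  moreover have "slack m R (int d) = int d * int j + int j - int (esize m R)"
    unfolding slack_def using j by (simp add: algebra_simps)
  moreover have "2 * int (esize m (V - {s})) + int (deg V m s) = 2 * (int d * int q) + int d + int (card hi)"
  proof -
    have "2 * esize m (V - {s}) + deg V m s = d * (2 * q + 1) + card hi"
      using esize_eq[of "V - {s}"] II_Vs q by simp
    then have "int (2 * esize m (V - {s}) + deg V m s) = int (d * (2 * q + 1) + card hi)" by simp
    then show ?thesis by (simp add: algebra_simps)
  qed
  moreover have "2 * int (esize m R) + int (cobound V m R) = 2 * (int d * int j) + int d + int (card (R \<inter> hi))"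
  proof -
    have RV: "R \<subseteq> V" using R(1) by blast
    have "vol V m R = II m R + cobound V m R" by (rule vol_split[OF fin RV])
    moreover have "vol V m R = d * card R + card (R \<inter> hi)" by (rule vol_low[OF R(1)])
    moreover have "2 * esize m R = II m R" by (rule esize_eq[OF RV])
    ultimately have "2 * esize m R + cobound V m R = d * (2 * j + 1) + card (R \<inter> hi)" using j by simp
    then have "int (2 * esize m R + cobound V m R) = int (d * (2 * j + 1) + card (R \<inter> hi))" by simp
    then show ?thesis by (simp add: algebra_simps)
  qed
  ultimately have "int (card V + deg V m s + card (R \<inter> hi)) \<le> int (card R + cobound V m R + card hi)"
    using q j by simp
  then show ?thesis by (simp only: of_nat_le_iff)
qed

end



context S9 begin

lemma two_elems:
  assumes "finite A" "\<not> card A \<le> 1"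
  obtains a b where "a \<in> A" "b \<in> A" "a \<noteq> b"
  using assms card_le_Suc0_iff_eq by (metis One_nat_def)

lemma pos_case:
  assumes dpos: "deg V m s > 0"
  shows "\<exists>\<mu>. pmf m V \<mu>"
proof (rule ccontr)
  assume np: "\<not> (\<exists>\<mu>. pmf m V \<mu>)"
  have symA: "\<forall>u v. m u v = m v u" using sym by blast
  obtain S P where bP: "barrier m V S P" and kt: "card S + 2 \<le> card P"
    using tutte_barrier[OF symA fin p_even np] by blast
  have SV: "S \<subseteq> V" and Pp: "\<And>C. C \<in> P \<Longrightarrow> C \<subseteq> V - S \<and> odd (card C) \<and> closedin m (V - S) C"
    and Pd: "\<And>C C'. C \<in> P \<Longrightarrow> C' \<in> P \<Longrightarrow> C \<noteq> C' \<Longrightarrow> C \<inter> C' = {}"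
    using bP unfolding barrier_def by auto
  have fS: "finite S" using SV fin finite_subset by blast
  have fP: "finite P" and fC: "\<And>C. C \<in> P \<Longrightarrow> finite C" using barrier_finite[OF fin bP] by auto
  have Pne: "\<And>C. C \<in> P \<Longrightarrow> C \<noteq> {}" using barrier_nonempty[OF bP] by blast
  define k where "k = card S"
  define hS where "hS = card (S \<inter> hi)"
  have hS_le: "hS \<le> card hi" unfolding hS_def using fin_hi by (simp add: card_mono)
  have hS_k: "hS \<le> k" unfolding hS_def k_def using fS by (simp add: card_mono)
  have sumP: "(\<Sum>C\<in>P. cobound V m C) \<le> d * k + hS"
  proof -
    have "(\<Sum>C\<in>P. cobound V m C) \<le> vol V m S"
      by (rule sum_cobound_le[OF fin]) (use sym SV Pp Pd in auto)
    also have "\<dots> \<le> d * k + hS" unfolding k_def hS_def by (rule vol_le[OF SV])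
    finally show ?thesis .
  qed
  have proper: "\<And>C. C \<in> P \<Longrightarrow> s \<notin> C \<Longrightarrow> C \<noteq> V - {s}"
  proof
    fix C assume C: "C \<in> P" and sC: "s \<notin> C" and CV: "C = V - {s}"
    have "\<not> card P \<le> 1" using kt by simp
    then obtain G1 G2 where G: "G1 \<in> P" "G2 \<in> P" "G1 \<noteq> G2" using two_elems fP by blast
    then obtain G where GP: "G \<in> P" and GC: "G \<noteq> C" by blast
    have "G \<inter> C = {}" using Pd GP C GC by blast
    moreover have "G \<subseteq> V - S" using Pp[OF GP] by blast
    ultimately have "G \<subseteq> {s}" using CV by blast
    then have Gs: "G = {s}" using Pne[OF GP] by blast
    have "S \<inter> C = {}" using Pp[OF C] by blast
    then have "S \<subseteq> {s}" using SV CV by blast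
    moreover have "s \<notin> S" using Pp[OF GP] Gs by blast
    ultimately have S0: "S = {}" by blast
    have "\<forall>w\<in>V - {s}. m s w = 0" using Pp[OF GP] Gs S0 unfolding closedin_def by blast
    then have "deg V m s = m s s + (\<Sum>w\<in>V - {s}. m s w)"
      unfolding deg_def using sum.remove[OF fin s_in, of "m s"] by simp
    also have "\<dots> = 0" using loop \<open>\<forall>w\<in>V - {s}. m s w = 0\<close> by simp
    finally show False using dpos by simp
  qed
  define DD where "DD = {C\<in>P. s \<notin> C \<and> card C \<noteq> 1 \<and> cobound V m C \<le> d}"
  define EE where "EE = {C\<in>P. s \<in> C}"
  define NN where "NN = P - DD - EE"
  define LL where "LL = {C\<in>NN. card C = 1 \<and> C \<inter> hi = {}}"
  define AA where "AA = NN - LL"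
  have starD: "\<And>D. D \<in> DD \<Longrightarrow> card V + deg V m s + card (D \<inter> hi) \<le> card D + cobound V m D + card hi"
  proof -
    fix D assume D: "D \<in> DD"
    have DP: "D \<in> P" and sD: "s \<notin> D" and c1: "card D \<noteq> 1" and cb: "cobound V m D \<le> d"
      using D unfolding DD_def by auto
    show "card V + deg V m s + card (D \<inter> hi) \<le> card D + cobound V m D + card hi"
    proof (rule star)
      show "D \<subseteq> V - {s}" using Pp[OF DP] sD by blast
      show "D \<noteq> V - {s}" by (rule proper[OF DP sD])
      show "odd (card D)" using Pp[OF DP] by blast
      show "card D > 1" using Pp[OF DP] c1 by (cases "card D") auto
      show "cobound V m D \<le> d" by (rule cb)
    qed
  qed
  have DD_big: "\<And>D. D \<in> DD \<Longrightarrow> card V < 2 * card D"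
  proof -
    fix D assume D: "D \<in> DD"
    have "cobound V m D \<le> d" using D unfolding DD_def by blast
    then show "card V < 2 * card D" using starD[OF D] ex_fact by linarith
  qed
  have fDD: "finite DD" unfolding DD_def using fP by simp
  have DD_le: "card DD \<le> 1"
  proof (rule ccontr)
    assume "\<not> card DD \<le> 1"
    then obtain D1 D2 where D: "D1 \<in> DD" "D2 \<in> DD" "D1 \<noteq> D2" using two_elems fDD by blast
    have P12: "D1 \<in> P" "D2 \<in> P" using D unfolding DD_def by auto
    have dis: "D1 \<inter> D2 = {}" using Pd P12 D(3) by blast
    have sub: "D1 \<union> D2 \<subseteq> V" using Pp P12 by blast
    have "card (D1 \<union> D2) = card D1 + card D2" using dis fC P12 by (simp add: card_Un_disjoint)
    moreover have "card (D1 \<union> D2) \<le> card V" using sub fin by (simp add: card_mono)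
    ultimately show False using DD_big[OF D(1)] DD_big[OF D(2)] by linarith
  qed
  have fEE: "finite EE" unfolding EE_def using fP by simp
  have EE_le: "card EE \<le> 1"
  proof (rule ccontr)
    assume "\<not> card EE \<le> 1"
    then obtain E1 E2 where E: "E1 \<in> EE" "E2 \<in> EE" "E1 \<noteq> E2" using two_elems fEE by blast
    then show False using Pd unfolding EE_def by blast
  qed
  have fNN: "finite NN" unfolding NN_def using fP by simp
  have NNb: "\<And>C. C \<in> NN \<Longrightarrow> d + (if C \<in> AA then 1 else 0) \<le> cobound V m C"
  proof -
    fix C assume C: "C \<in> NN"
    have CP: "C \<in> P" and sC: "s \<notin> C" and nD: "\<not> (card C \<noteq> 1 \<and> cobound V m C \<le> d)"
      using C unfolding NN_def DD_def EE_def by auto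
    show "d + (if C \<in> AA then 1 else 0) \<le> cobound V m C"
    proof (cases "card C = 1")
      case True
      then obtain v where v: "C = {v}" by (rule card_1_singletonE)
      have vV: "v \<in> V - {s}" using Pp[OF CP] v sC by blast
      have cb: "cobound V m C = deg V m v" unfolding v by (rule cobound_single) (use fin vV loop in auto)
      show ?thesis
      proof (cases "C \<in> AA")
        case True
        then have "C \<inter> hi \<noteq> {}" using C \<open>card C = 1\<close> unfolding AA_def LL_def by blast
        then have "v \<in> hi" using v by blast
        then show ?thesis using cb deg_x[OF vV] True by simp
      next
        case False then show ?thesis using cb deg_x[OF vV] by simp
      qed
    next
      case False
      then have "d < cobound V m C" using nD by simp
      then show ?thesis by simp
    qed
  qed
  have sumNN: "d * card NN + card AA \<le> (\<Sum>C\<in>NN. cobound V m C)"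
  proof -
    have "(\<Sum>C\<in>NN. d + (if C \<in> AA then 1 else 0)) \<le> (\<Sum>C\<in>NN. cobound V m C)"
      by (rule sum_mono) (rule NNb)
    moreover have "(\<Sum>C\<in>NN. d + (if C \<in> AA then 1 else (0::nat))) = d * card NN + card AA"
    proof -
      have "(\<Sum>C\<in>NN. (if C \<in> AA then 1 else (0::nat))) = (\<Sum>C\<in>NN \<inter> {C. C \<in> AA}. 1) + (\<Sum>C\<in>NN \<inter> - {C. C \<in> AA}. 0)"
        by (rule sum.If_cases[OF fNN])
      moreover have "NN \<inter> {C. C \<in> AA} = AA" unfolding AA_def by blast
      ultimately have "(\<Sum>C\<in>NN. (if C \<in> AA then 1 else (0::nat))) = card AA" by simp
      then show ?thesis by (simp add: sum.distrib)
    qed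
    ultimately show ?thesis by simp
  qed
  have Psplit: "(\<Sum>C\<in>P. cobound V m C) = (\<Sum>C\<in>NN. cobound V m C) + (\<Sum>C\<in>DD. cobound V m C) + (\<Sum>C\<in>EE. cobound V m C)"
  proof -
    have "P = NN \<union> (DD \<union> EE)" unfolding NN_def DD_def EE_def by blast
    moreover have "NN \<inter> (DD \<union> EE) = {}" unfolding NN_def by blast
    moreover have "DD \<inter> EE = {}" unfolding DD_def EE_def by blast
    ultimately show ?thesis using fNN fDD fEE by (simp add: sum.union_disjoint)
  qed
  have cardP: "card P = card NN + card DD + card EE"
  proof -
    have "P = NN \<union> (DD \<union> EE)" unfolding NN_def DD_def EE_def by blast
    moreover have "NN \<inter> (DD \<union> EE) = {}" unfolding NN_def by blast
    moreover have "DD \<inter> EE = {}" unfolding DD_def EE_def by blast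
    ultimately show ?thesis using fNN fDD fEE by (simp add: card_Un_disjoint)
  qed
  have cardNN: "card NN = card LL + card AA"
  proof -
    have "NN = LL \<union> AA" "LL \<inter> AA = {}" unfolding AA_def LL_def by blast+
    moreover have "finite LL" "finite AA" using fNN unfolding LL_def AA_def by auto
    ultimately show ?thesis by (simp add: card_Un_disjoint)
  qed
  show False
  proof (cases "DD = {}")
    case True
    show False
    proof (cases "EE = {}")
      case True
      have "card NN = card P" using cardP \<open>DD = {}\<close> True by simp
      then have "k + 2 \<le> card NN" using kt k_def by simp
      then have "d * (k + 2) \<le> d * card NN" by (rule mult_le_mono2)
      then have "d * k + 2 * d \<le> d * card NN" by (simp add: algebra_simps)
      then show False using sumNN Psplit sumP hS_le h_le d_ge by linarith
    next
      case False
      then obtain E where E: "E \<in> EE" by blast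
      have "\<forall>a\<in>EE. \<forall>b\<in>EE. a = b" using card_le_Suc0_iff_eq[OF fEE] EE_le by simp
      then have EE1: "EE = {E}" using E by blast
      have "card NN + 1 = card P" using cardP \<open>DD = {}\<close> EE1 by simp
      then have "k + 1 \<le> card NN" using kt k_def by simp
      then have "d * (k + 1) \<le> d * card NN" by (rule mult_le_mono2)
      then have "d * k + d \<le> d * card NN" by (simp add: algebra_simps)
      moreover have "(\<Sum>C\<in>EE. cobound V m C) = cobound V m E" using EE1 by simp
      moreover have "(\<Sum>C\<in>DD. cobound V m C) = 0" using \<open>DD = {}\<close> by simp
      ultimately have ineq: "d + cobound V m E \<le> hS" using sumNN Psplit sumP by linarith
      then have cE: "cobound V m E = 0" using hS_le h_le by linarith
      have hSd: "hS = card hi" "hS = d" using ineq hS_le h_le by linarith+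
      have EP: "E \<in> P" and sE: "s \<in> E" using E unfolding EE_def by auto
      have EV: "E \<subseteq> V" using Pp[OF EP] by blast
      define R where "R = V - E"
      have fE: "finite E" using fC[OF EP] .
      have RVs: "R \<subseteq> V - {s}" unfolding R_def using sE by blast
      have SR: "S \<subseteq> R" unfolding R_def using SV Pp[OF EP] by blast
      have RnV: "R \<noteq> V - {s}"
      proof
        assume "R = V - {s}"
        then have "E = {s}" unfolding R_def using EV sE by blast
        then have "cobound V m E = deg V m s" using cobound_single[of V s m, OF fin s_in loop[of s]] by simp
        then show False using cE dpos by simp
      qed
      have cR: "card R = card V - card E" unfolding R_def using EV fE by (simp add: card_Diff_subset)
      have cEV: "card E \<le> card V" using EV fin by (simp add: card_mono)
      have cE1: "card E \<ge> 1" using Pne[OF EP] fE by (simp add: Suc_leI card_gt_0_iff)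
      have oR: "odd (card R)" using cR cEV p_even Pp[OF EP] by (simp add: even_diff_nat)
      have "card S \<ge> d" using hS_k hSd k_def by simp
      moreover have "card S \<le> card R" using SR fin unfolding R_def by (intro card_mono) auto
      ultimately have cR2: "card R > 1" using d_ge by linarith
      have cbR: "cobound V m R = 0" unfolding R_def using cobound_compl[OF _ EV] sym cE by simp
      have "card V + deg V m s + card (R \<inter> hi) \<le> card R + cobound V m R + card hi"
        by (rule star[OF RVs RnV oR cR2]) (use cbR in simp)
      moreover have "card (S \<inter> hi) \<le> card (R \<inter> hi)" using SR fin_hi by (intro card_mono) auto
      ultimately show False using cbR hSd hS_def cR cEV cE1 by linarith
    qed
  next
    case False
    then obtain D where D: "D \<in> DD" by blast
    have "\<forall>a\<in>DD. \<forall>b\<in>DD. a = b" using card_le_Suc0_iff_eq[OF fDD] DD_le by simp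
    then have DD1: "DD = {D}" using D by blast
    have DP: "D \<in> P" and sD: "s \<notin> D" using D unfolding DD_def by auto
    have fD: "finite D" using fC[OF DP] .
    have DV: "D \<subseteq> V" using Pp[OF DP] by blast
    have NNk: "k \<le> card NN" using cardP DD1 EE_le kt k_def by simp
    have sD': "card V + deg V m s + card (D \<inter> hi) \<le> card D + cobound V m D + card hi" by (rule starD[OF D])
    have fLL: "finite LL" using fNN unfolding LL_def by simp
    have LLsing: "\<And>C. C \<in> LL \<Longrightarrow> card C = 1" unfolding LL_def by blast
    have cUL: "card (\<Union>LL) = card LL"
    proof -
      have "card (\<Union>LL) = (\<Sum>C\<in>LL. card C)"
        apply (rule card_Union_disjoint)
        using Pd fC unfolding LL_def NN_def pairwise_def disjnt_def by auto
      also have "\<dots> = (\<Sum>C\<in>LL. 1)" using LLsing by simp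
      finally show ?thesis by simp
    qed
    have ULsub: "\<Union>LL \<subseteq> (V - D) - hi"
    proof
      fix x assume "x \<in> \<Union>LL"
      then obtain C where C: "C \<in> LL" "x \<in> C" by blast
      have CP: "C \<in> P" and CD: "C \<noteq> D" and Chi: "C \<inter> hi = {}"
        using C(1) D unfolding LL_def NN_def by auto
      have "C \<inter> D = {}" using Pd CP DP CD by blast
      then show "x \<in> (V - D) - hi" using Pp[OF CP] C(2) Chi by blast
    qed
    have sUL: "s \<notin> \<Union>LL" unfolding LL_def NN_def EE_def by blast
    have Zsub: "insert s (\<Union>LL) \<subseteq> (V - D) - hi" using ULsub sD s_in hi_sub by blast
    have fUL: "finite (\<Union>LL)" using ULsub fin finite_subset by blast
    have "card (insert s (\<Union>LL)) = card LL + 1" using sUL fUL cUL by simp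
    moreover have "card (insert s (\<Union>LL)) \<le> card ((V - D) - hi)" using Zsub fin by (intro card_mono) auto
    moreover have "card ((V - D) - hi) = card (V - D) - card (hi - D)"
    proof -
      have "card ((V - D) - hi) = card (V - D) - card ((V - D) \<inter> hi)"
        by (rule card_Diff_subset_Int) (use fin in simp)
      moreover have "(V - D) \<inter> hi = hi - D" using hi_sub by blast
      ultimately show ?thesis by simp
    qed
    moreover have "card (V - D) = card V - card D" using DV fD by (simp add: card_Diff_subset)
    moreover have "(V - D) \<inter> hi = hi - D" using hi_sub by blast
    moreover have "card (hi - D) = card hi - card (D \<inter> hi)"
      using card_Diff_subset_Int[of hi D] fin_hi by (simp add: Int_commute)
    moreover have "card (D \<inter> hi) \<le> card hi" using fin_hi by (simp add: card_mono)
    moreover have "card (hi - D) \<le> card (V - D)" using hi_sub fin by (intro card_mono) auto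
    moreover have "card D \<le> card V" using DV fin by (simp add: card_mono)
    ultimately have low: "card LL + 1 + card hi + card D \<le> card V + card (D \<inter> hi)" by linarith
    have cbD: "card LL + 1 + deg V m s \<le> cobound V m D" using low sD' by linarith
    have "(\<Sum>C\<in>DD. cobound V m C) = cobound V m D" using DD1 by simp
    then have "d * card NN + card AA + card LL + 1 \<le> d * k + k"
      using sumNN Psplit sumP hS_k cbD by linarith
    moreover have "d * k \<le> d * card NN" using NNk by (rule mult_le_mono2)
    ultimately show False using cardNN NNk by linarith
  qed
qed

end



context S9 begin

lemma zero_case:
  assumes d0: "deg V m s = 0"
  shows "\<exists>v\<in>V. deg V m v = d \<and> (\<exists>\<mu>. pmf m (V - {s} - {v}) \<mu>)"
proof -
  define L0 where "L0 = {v \<in> V - {s}. deg V m v = d}"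
  define m2 where "m2 = (\<lambda>u v. if (u = s \<and> v \<in> L0) \<or> (v = s \<and> u \<in> L0) then 1 else m u v)"
  have sym2: "\<forall>u v. m2 u v = m2 v u" unfolding m2_def using sym by auto
  have ms: "\<And>w. m s w = 0" using ms_zero[OF d0] .
  have m_le: "\<And>u v. m2 u v = 0 \<Longrightarrow> m u v = 0"
  proof -
    fix u v assume "m2 u v = 0"
    show "m u v = 0"
    proof (cases "u = s \<or> v = s")
      case True then show ?thesis using ms[of v] ms[of u] sym[of u s] by auto
    next
      case False then show ?thesis using \<open>m2 u v = 0\<close> unfolding m2_def by simp
    qed
  qed
  have cl2: "\<And>X C. closedin m2 X C \<Longrightarrow> closedin m X C"
    unfolding closedin_def using m_le by blast
  have m2_eq: "\<And>u v. u \<noteq> s \<Longrightarrow> v \<noteq> s \<Longrightarrow> m2 u v = m u v" unfolding m2_def by auto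
  show ?thesis
  proof (cases "\<exists>\<mu>. pmf m2 V \<mu>")
    case True
    then obtain \<mu> where mu: "pmf m2 V \<mu>" by blast
    define v where "v = \<mu> s"
    have vs: "v \<in> V" "v \<noteq> s" "\<mu> v = s" "0 < m2 s v" using mu s_in unfolding pmf_def v_def by auto
    have vL: "v \<in> L0"
    proof (rule ccontr)
      assume "v \<notin> L0"
      then have "m2 s v = m s v" unfolding m2_def using vs(2) by auto
      then show False using vs(4) ms by simp
    qed
    then have dv: "deg V m v = d" unfolding L0_def by blast
    have "pmf m (V - {s} - {v}) \<mu>"
      unfolding pmf_def
    proof (intro ballI)
      fix x assume x: "x \<in> V - {s} - {v}"
      have P: "\<mu> x \<in> V" "\<mu> x \<noteq> x" "\<mu> (\<mu> x) = x" "0 < m2 x (\<mu> x)" using mu x unfolding pmf_def by auto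
      have n1: "\<mu> x \<noteq> s"
      proof
        assume "\<mu> x = s"
        then have "x = \<mu> s" using P(3) by simp
        then show False using x v_def by simp
      qed
      have n2: "\<mu> x \<noteq> v"
      proof
        assume "\<mu> x = v"
        then have "x = \<mu> v" using P(3) by simp
        then show False using x vs(3) by simp
      qed
      have "m2 x (\<mu> x) = m x (\<mu> x)" using x n1 by (intro m2_eq) auto
      then show "\<mu> x \<in> V - {s} - {v} \<and> \<mu> x \<noteq> x \<and> \<mu> (\<mu> x) = x \<and> 0 < m x (\<mu> x)"
        using P n1 n2 by simp
    qed
    then show ?thesis using vs(1) dv by blast
  next
    case False
    obtain S P where bP: "barrier m2 V S P" and kt: "card S + 2 \<le> card P"
      using tutte_barrier[OF sym2 fin p_even False] by blast
    have SV: "S \<subseteq> V" and Pp2: "\<And>C. C \<in> P \<Longrightarrow> C \<subseteq> V - S \<and> odd (card C) \<and> closedin m2 (V - S) C"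
      and Pd: "\<And>C C'. C \<in> P \<Longrightarrow> C' \<in> P \<Longrightarrow> C \<noteq> C' \<Longrightarrow> C \<inter> C' = {}"
      using bP unfolding barrier_def by auto
    have Pp: "\<And>C. C \<in> P \<Longrightarrow> C \<subseteq> V - S \<and> odd (card C) \<and> closedin m (V - S) C"
      using Pp2 cl2 by blast
    have fS: "finite S" using SV fin finite_subset by blast
    have fP: "finite P" and fC: "\<And>C. C \<in> P \<Longrightarrow> finite C" using barrier_finite[OF fin bP] by auto
    have Pne: "\<And>C. C \<in> P \<Longrightarrow> C \<noteq> {}" using barrier_nonempty[OF bP] by blast
    define k where "k = card S"
    have sumP: "(\<Sum>C\<in>P. cobound V m C) \<le> vol V m S"
      by (rule sum_cobound_le[OF fin]) (use sym SV Pp Pd in auto)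
    have ex0: "2 * d + 2 * card hi < card V" using ex_fact d0 by simp
    have singl: "\<And>C. C \<in> P \<Longrightarrow> s \<notin> C \<Longrightarrow> card C = 1 \<Longrightarrow> \<exists>v. C = {v} \<and> v \<in> V - {s} \<and> cobound V m C = deg V m v"
    proof -
      fix C assume CP: "C \<in> P" and sC: "s \<notin> C" and c1: "card C = 1"
      then obtain v where v: "C = {v}" by (metis card_1_singletonE)
      have vV: "v \<in> V - {s}" using Pp[OF CP] v sC by blast
      have "cobound V m C = deg V m v" unfolding v by (rule cobound_single) (use fin vV loop in auto)
      then show "\<exists>v. C = {v} \<and> v \<in> V - {s} \<and> cobound V m C = deg V m v" using v vV by blast
    qed
    show ?thesis
    proof (cases "s \<in> S")
      case True
      define DD where "DD = {C\<in>P. card C \<noteq> 1 \<and> cobound V m C \<le> d}"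
      define NN where "NN = P - DD"
      have sC: "\<And>C. C \<in> P \<Longrightarrow> s \<notin> C" using Pp True by blast
      have starD: "\<And>D. D \<in> DD \<Longrightarrow> card V + card (D \<inter> hi) \<le> card D + cobound V m D + card hi"
      proof -
        fix D assume D: "D \<in> DD"
        have DP: "D \<in> P" and c1: "card D \<noteq> 1" and cb: "cobound V m D \<le> d"
          using D unfolding DD_def by auto
        have "card V + deg V m s + card (D \<inter> hi) \<le> card D + cobound V m D + card hi"
        proof (rule star)
          show "D \<subseteq> V - {s}" using Pp[OF DP] sC[OF DP] by blast
          show "D \<noteq> V - {s}"
          proof
            assume DV: "D = V - {s}"
            have "\<not> card P \<le> 1" using kt by simp
            then obtain G1 G2 where "G1 \<in> P" "G2 \<in> P" "G1 \<noteq> G2" using two_elems fP by blast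
            then obtain G where GP: "G \<in> P" and GD: "G \<noteq> D" by blast
            obtain x where x: "x \<in> G" using Pne[OF GP] by blast
            have "x \<notin> D" using Pd[OF GP DP GD] x by blast
            moreover have "x \<in> V - {s}" using Pp[OF GP] sC[OF GP] x by blast
            ultimately show False using DV by blast
          qed
          show "odd (card D)" using Pp[OF DP] by blast
          show "card D > 1" using Pp[OF DP] c1 by (cases "card D") auto
          show "cobound V m D \<le> d" by (rule cb)
        qed
        then show "card V + card (D \<inter> hi) \<le> card D + cobound V m D + card hi" using d0 by simp
      qed
      have fDD: "finite DD" unfolding DD_def using fP by simp
      have DD_le: "card DD \<le> 1"
      proof (rule ccontr)
        assume "\<not> card DD \<le> 1"
        then obtain D1 D2 where D: "D1 \<in> DD" "D2 \<in> DD" "D1 \<noteq> D2" using two_elems fDD by blast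
        have P12: "D1 \<in> P" "D2 \<in> P" using D unfolding DD_def by auto
        have c12: "cobound V m D1 \<le> d" "cobound V m D2 \<le> d" using D unfolding DD_def by auto
        have dis: "D1 \<inter> D2 = {}" using Pd P12 D(3) by blast
        have sub: "D1 \<union> D2 \<subseteq> V" using Pp P12 by blast
        have "card (D1 \<union> D2) = card D1 + card D2" using dis fC P12 by (simp add: card_Un_disjoint)
        moreover have "card (D1 \<union> D2) \<le> card V" using sub fin by (simp add: card_mono)
        ultimately show False using starD[OF D(1)] starD[OF D(2)] c12 ex0 by linarith
      qed
      have fNN: "finite NN" unfolding NN_def using fP by simp
      have NNb: "\<And>C. C \<in> NN \<Longrightarrow> d \<le> cobound V m C"
      proof -
        fix C assume C: "C \<in> NN"
        have CP: "C \<in> P" and nD: "\<not> (card C \<noteq> 1 \<and> cobound V m C \<le> d)"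
          using C unfolding NN_def DD_def by auto
        show "d \<le> cobound V m C"
        proof (cases "card C = 1")
          case True
          then obtain v where v: "C = {v}" "v \<in> V - {s}" "cobound V m C = deg V m v"
            using singl[OF CP sC[OF CP]] by blast
          then show ?thesis using deg_x[OF v(2)] by simp
        next
          case False then show ?thesis using nD by simp
        qed
      qed
      have "d * card NN \<le> (\<Sum>C\<in>NN. cobound V m C)"
        using sum_mono[of NN "\<lambda>_. d" "\<lambda>C. cobound V m C"] NNb by (simp add: mult.commute)
      moreover have "(\<Sum>C\<in>NN. cobound V m C) \<le> (\<Sum>C\<in>P. cobound V m C)"
        unfolding NN_def by (rule sum_mono2) (use fP in auto)
      moreover have "card NN \<ge> card P - 1"
      proof -
        have "DD \<subseteq> P" unfolding DD_def by blast
        then have "card NN = card P - card DD" unfolding NN_def using fDD by (simp add: card_Diff_subset)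
        then show ?thesis using DD_le by simp
      qed
      moreover have "vol V m S \<le> d * (k - 1) + card hi"
      proof -
        have "vol V m S = deg V m s + vol V m (S - {s})"
          unfolding vol_def using sum.remove[OF fS True] by simp
        moreover have "vol V m (S - {s}) = d * card (S - {s}) + card ((S - {s}) \<inter> hi)"
          by (rule vol_low) (use SV in blast)
        moreover have "card (S - {s}) = k - 1" unfolding k_def using True fS by simp
        moreover have "card ((S - {s}) \<inter> hi) \<le> card hi" using fin_hi by (intro card_mono) auto
        ultimately show ?thesis using d0 by simp
      qed
      moreover have "k \<ge> 1"
      proof -
        have "card S > 0" using True fS card_gt_0_iff by blast
        then show ?thesis unfolding k_def by simp
      qed
      moreover have "d * (k + 1) \<le> d * card NN"
      proof (rule mult_le_mono2)
        show "k + 1 \<le> card NN" using kt k_def \<open>card NN \<ge> card P - 1\<close> by simp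
      qed
      moreover have "d * (k + 1) = d * (k - 1) + 2 * d" using \<open>k \<ge> 1\<close>
        by (cases k) (simp_all add: algebra_simps)
      ultimately have False using sumP h_le d_ge by linarith
      then show ?thesis ..
    next
      case False
      define QQ where "QQ = {C\<in>P. s \<notin> C}"
      define EE where "EE = {C\<in>P. s \<in> C}"
      have allhigh: "\<And>C. C \<in> QQ \<Longrightarrow> C \<subseteq> hi"
      proof
        fix C u assume C: "C \<in> QQ" and u: "u \<in> C"
        have CP: "C \<in> P" and sC: "s \<notin> C" using C unfolding QQ_def by auto
        have uV: "u \<in> V - {s}" using Pp[OF CP] sC u by blast
        show "u \<in> hi"
        proof (rule ccontr)
          assume "u \<notin> hi"
          then have "u \<in> L0" using deg_x[OF uV] uV unfolding L0_def by auto
          then have "m2 u s = 1" unfolding m2_def by simp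
          moreover have "s \<in> V - S - C" using s_in False sC by blast
          moreover have "\<forall>x\<in>C. \<forall>y\<in>V - S - C. m2 x y = 0" using Pp2[OF CP] unfolding closedin_def by blast
          ultimately show False using u by fastforce
        qed
      qed
      have QQb: "\<And>C. C \<in> QQ \<Longrightarrow> d + 1 \<le> cobound V m C"
      proof -
        fix C assume C: "C \<in> QQ"
        have CP: "C \<in> P" and sC: "s \<notin> C" using C unfolding QQ_def by auto
        show "d + 1 \<le> cobound V m C"
        proof (cases "card C = 1")
          case True
          then obtain v where v: "C = {v}" "v \<in> V - {s}" "cobound V m C = deg V m v"
            using singl[OF CP sC] by blast
          have "v \<in> hi" using allhigh[OF C] v(1) by blast
          then show ?thesis using deg_x[OF v(2)] v(3) by simp
        next
          case c1: False
          show ?thesis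
          proof (rule ccontr)
            assume "\<not> d + 1 \<le> cobound V m C"
            then have cb: "cobound V m C \<le> d" by simp
            have "card V + deg V m s + card (C \<inter> hi) \<le> card C + cobound V m C + card hi"
            proof (rule star)
              show CVs: "C \<subseteq> V - {s}" using Pp[OF CP] sC by blast
              show "C \<noteq> V - {s}"
              proof
                assume CV: "C = V - {s}"
                obtain v where v: "v \<in> V - {s}" "deg V m v = d" using some_low by blast
                have "v \<notin> hi" using v unfolding hi_def by simp
                moreover have "v \<in> C" using v CV by blast
                ultimately show False using allhigh[OF C] by blast
              qed
              show "odd (card C)" using Pp[OF CP] by blast
              show "card C > 1" using Pp[OF CP] c1 by (cases "card C") auto
              show "cobound V m C \<le> d" by (rule cb)
            qed
            moreover have "C \<inter> hi = C" using allhigh[OF C] by blast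
            ultimately show False using cb ex0 d0 by simp
          qed
        qed
      qed
      have fQQ: "finite QQ" unfolding QQ_def using fP by simp
      have fEE: "finite EE" unfolding EE_def using fP by simp
      have EE_le: "card EE \<le> 1"
      proof (rule ccontr)
        assume "\<not> card EE \<le> 1"
        then obtain E1 E2 where E: "E1 \<in> EE" "E2 \<in> EE" "E1 \<noteq> E2" using two_elems fEE by blast
        then show False using Pd unfolding EE_def by blast
      qed
      have cP: "card P = card QQ + card EE"
      proof -
        have "P = QQ \<union> EE" "QQ \<inter> EE = {}" unfolding QQ_def EE_def by blast+
        then show ?thesis using fQQ fEE by (simp add: card_Un_disjoint)
      qed
      have "(d + 1) * card QQ \<le> (\<Sum>C\<in>QQ. cobound V m C)"
        using sum_mono[of QQ "\<lambda>_. d + 1" "\<lambda>C. cobound V m C"] QQb by (simp add: mult.commute)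
      moreover have "(\<Sum>C\<in>QQ. cobound V m C) \<le> (\<Sum>C\<in>P. cobound V m C)"
        unfolding QQ_def by (rule sum_mono2) (use fP in auto)
      moreover have "vol V m S \<le> d * k + card (S \<inter> hi)" unfolding k_def by (rule vol_le[OF SV])
      moreover have "card (S \<inter> hi) \<le> k" unfolding k_def using fS by (intro card_mono) auto
      moreover have "(d + 1) * (k + 1) \<le> (d + 1) * card QQ"
        by (rule mult_le_mono2) (use kt k_def cP EE_le in simp)
      moreover have "(d + 1) * (k + 1) = d * k + k + d + 1" by (simp add: algebra_simps)
      ultimately have False using sumP by linarith
      then show ?thesis ..
    qed
  qed
qed

end

theorem mainTheorem9:
  fixes V :: "'a set" and m :: "'a \<Rightarrow> 'a \<Rightarrow> nat" and s :: 'a and d :: nat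
  assumes H: "multigraph V m"
    and p_even: "even (card V)" and p_ge: "card V \<ge> 4"
    and d_ge: "d \<ge> 2"
    and s_in: "s \<in> V" and deg_s: "deg V m s \<le> d"
    and deg_other: "\<forall>v\<in>V - {s}. deg V m v = d \<or> deg V m v = d + 1"
    and few_high: "card {v \<in> V - {s}. deg V m v = d + 1} \<le> d"
    and some_low: "\<exists>v\<in>V - {s}. deg V m v = d"
    and ex_small: "4 * excess m (V - {s}) (int d) < int (card V)"
    and dom: "slack_dominant V m s d"
  shows "(deg V m s > 0 \<longrightarrow> has_perfect_matching m V) \<and>
         (deg V m s = 0 \<longrightarrow> (\<exists>v\<in>V. deg V m v = d \<and> has_perfect_matching m (V - {s} - {v})))"
proof -
  have "S9 V m s d" unfolding S9_def using assms by blast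
  then interpret S: S9 V m s d .
  show ?thesis
  proof (intro conjI impI)
    assume "deg V m s > 0"
    then obtain \<mu> where "pmf m V \<mu>" using S.pos_case by blast
    then show "has_perfect_matching m V" by (rule pmf_hpm)
  next
    assume "deg V m s = 0"
    then obtain v \<mu> where "v \<in> V" "deg V m v = d" "pmf m (V - {s} - {v}) \<mu>" using S.zero_case by blast
    then show "\<exists>v\<in>V. deg V m v = d \<and> has_perfect_matching m (V - {s} - {v})" using pmf_hpm by blast
  qed
qed

end
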